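(* Fix an integer horizon $T\ge 1$ and positive constants $s,k_u,m,\delta_1,\delta_2,\gamma,q,k_w,n,A,M_1$ with $0<m<1$, $0<n<1$, and constants $M_2\ge 0$, $0<N<1$. Consider the discrete-time controlled system (Model A) \[ \begin{aligned} u_{t+1}&=u_t\Big[s\Big(1-\tfrac{u_t}{k_u}\Big)\Big(\tfrac{u_t}{k_u}-m\Big)+1\Big](1-\delta_1 v_t)+h_t w_t\Big[q\Big(1-\tfrac{w_t}{k_w}\Big)\Big(\tfrac{w_t}{k_w}-n\Big)+1\Big],\\ v_{t+1}&=\Big(v_t+u_t\Big[s\Big(1-\tfrac{u_t}{k_u}\Big)\Big(\tfrac{u_t}{k_u}-m\Big)+1\Big]\delta_2 v_t\Big)(1-\gamma),\\ w_{t+1}&=(w_t-h_t w_t)\Big[q\Big(1-\tfrac{w_t}{k_w}\Big)\Big(\tfrac{w_t}{k_w}-n\Big)+1\Big], \end{aligned} \qquad t=0,1,\dots,T-1, \] with given initial values $u_0,v_0,w_0$, where the control ${\bf h}=(h_0,\dots,h_{T-1})$ ranges over the control set $\Omega=\{{\bf h}: 0\le h_t\le A,\ t=0,\dots,T-1\}$, and the objective functional to be maximized is \[ J({\bf h})=u_T+N w_T-\sum_{t=0}^{T-1}\big(M_1 h_t^2+M_2 h_t\big). \] Let ${\bf h}^\ast=(h^\ast_0,\dots,h^\ast_{T-1})\in\Omega$ be an optimal control with corresponding state solutions ${\bf u}^\ast=(u^\ast_0,\dots,u^\ast_T)$, ${\bf v}^\ast=(v^\ast_0,\dots,v^\ast_T)$,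 ${\bf w}^\ast=(w^\ast_0,\dots,w^\ast_T)$. Then there exist adjoint vectors $\lambda_{\bf u}=(\lambda_{u,0},\dots,\lambda_{u,T})$, $\lambda_{\bf v}=(\lambda_{v,0},\dots,\lambda_{v,T})$, $\lambda_{\bf w}=(\lambda_{w,0},\dots,\lambda_{w,T})$ satisfying, for $t=0,\dots,T-1$, \[ \begin{aligned} \lambda_{u,t}=&\Big((1-\delta_1 v^\ast_t)\lambda_{u,t+1}+\delta_2 v^\ast_t(1-\gamma)\lambda_{v,t+1}\Big)\Big[s\Big(1-\tfrac{u^\ast_t}{k_u}\Big)\Big(\tfrac{u^\ast_t}{k_u}-m\Big)+1\Big]\\ &+\Big(u^\ast_t(1-\delta_1 v^\ast_t)\lambda_{u,t+1}+u^\ast_t\delta_2 v^\ast_t(1-\gamma)\lambda_{v,t+1}\Big)\Big[\tfrac{s}{k_u}\Big(1-\tfrac{u^\ast_t}{k_u}\Big)-\tfrac{s}{k_u}\Big(\tfrac{u^\ast_t}{k_u}-m\Big)\Big],\\ \lambda_{v,t}=&-\lambda_{u,t+1}u^\ast_t\Big[s\Big(1-\tfrac{u^\ast_t}{k_u}\Big)\Big(\tfrac{u^\ast_t}{k_u}-m\Big)+1\Big]\delta_1\\ &+\lambda_{v,t+1}\Big[1+u^\ast_t\Big(s\Big(1-\tfrac{u^\ast_t}{k_u}\Big)\Big(\tfrac{u^\ast_t}{k_u}-m\Big)+1\Big)\delta_2\Big](1-\gamma),\\ \lambda_{w,t}=&\Big(h^\ast_t\lambda_{u,t+1}+(1-h^\ast_t)\lambda_{w,t+1}\Big)\Big[q\Big(1-\tfrac{w^\ast_t}{k_w}\Big)\Big(\tfrac{w^\ast_t}{k_w}-n\Big)+1\Big]\\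 &+w^\ast_t\Big(h^\ast_t\lambda_{u,t+1}+(1-h^\ast_t)\lambda_{w,t+1}\Big)\Big[\tfrac{q}{k_w}\Big(1-\tfrac{w^\ast_t}{k_w}\Big)-\tfrac{q}{k_w}\Big(\tfrac{w^\ast_t}{k_w}-n\Big)\Big], \end{aligned} \] with transversality conditions $\lambda_{u,T}=1$, $\lambda_{v,T}=0$, $\lambda_{w,T}=N$. Moreover, for $t=0,\dots,T-1$, \[ h^\ast_t=\min\left\{A,\ \max\left\{0,\ \frac{(\lambda_{u,t+1}-\lambda_{w,t+1})\Big[q\Big(1-\tfrac{w^\ast_t}{k_w}\Big)\Big(\tfrac{w^\ast_t}{k_w}-n\Big)+1\Big]w^\ast_t-M_2}{2M_1}\right\}\right\}. \]
   Context: Here $u_t$, $v_t$, $w_t$ denote the prey (target), predator and reserve population sizes at time step $t$; $h_t$ is the proportion of the reserve population translocated to the target population at step $t$. The parameters: $s$, $q$ are intrinsic growth rates of prey and reserve, $k_u$, $k_w$ their carrying capacities, $m,n\in(0,1)$ strong Allee constants, $\delta_1$ the consumption rate, $\delta_2$ the attack rate, $\gamma$ the predator decay rate, $A$ the maximum control effort, $M_1>0$, $M_2\ge 0$ cost constants and $N\in(0,1)$ the weight on the final reserve population. In the paper's setting the initial reserve population satisfies $w_0>nk_w$ and the initial prey population is below its growth threshold. *)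

theory Defs
  imports Complex_Main
begin

definition growth :: "real \<Rightarrow> real \<Rightarrow> real \<Rightarrow> real \<Rightarrow> real" where
  "growth r k a x = r * (1 - x / k) * (x / k - a) + 1"

primrec modelA ::
  "real \<Rightarrow> real \<Rightarrow> real \<Rightarrow> real \<Rightarrow> real \<Rightarrow> real \<Rightarrow> real \<Rightarrow> real \<Rightarrow> real \<Rightarrow>
   real \<Rightarrow> real \<Rightarrow> real \<Rightarrow> (nat \<Rightarrow> real) \<Rightarrow> nat \<Rightarrow> real \<times> real \<times> real" where
  "modelA s ku m d1 d2 g q kw n u0 v0 w0 h 0 = (u0, v0, w0)"
| "modelA s ku m d1 d2 g q kw n u0 v0 w0 h (Suc t) =
     (let (u, v, w) = modelA s ku m d1 d2 g q kw n u0 v0 w0 h t in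
       (u * growth s ku m u * (1 - d1 * v) + h t * w * growth q kw n w,
        (v + u * growth s ku m u * d2 * v) * (1 - g),
        (w - h t * w) * growth q kw n w))"

definition stU where "stU s ku m d1 d2 g q kw n u0 v0 w0 h t = fst (modelA s ku m d1 d2 g q kw n u0 v0 w0 h t)"
definition stV where "stV s ku m d1 d2 g q kw n u0 v0 w0 h t = fst (snd (modelA s ku m d1 d2 g q kw n u0 v0 w0 h t))"
definition stW where "stW s ku m d1 d2 g q kw n u0 v0 w0 h t = snd (snd (modelA s ku m d1 d2 g q kw n u0 v0 w0 h t))"

definition controlset :: "nat \<Rightarrow> real \<Rightarrow> (nat \<Rightarrow> real) set" where
  "controlset T A = {h. \<forall>t<T. 0 \<le> h t \<and> h t \<le> A}"

definition objJ where
  "objJ s ku m d1 d2 g q kw n u0 v0 w0 T N M1 M2 h =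
     stU s ku m d1 d2 g q kw n u0 v0 w0 h T + N * stW s ku m d1 d2 g q kw n u0 v0 w0 h T
     - (\<Sum>t<T. M1 * (h t)^2 + M2 * h t)"

end

theory Submission imports Defs "HOL-Analysis.Analysis" begin

context
  fixes s ku m d1 d2 g q kw n u0 v0 w0 :: real
begin

definition stepf :: "real \<Rightarrow> real \<times> real \<times> real \<Rightarrow> real \<times> real \<times> real" where
  "stepf c x = (fst x * growth s ku m (fst x) * (1 - d1 * fst (snd x)) + c * snd (snd x) * growth q kw n (snd (snd x)),
                (fst (snd x) + fst x * growth s ku m (fst x) * d2 * fst (snd x)) * (1 - g),
                (snd (snd x) - c * snd (snd x)) * growth q kw n (snd (snd x)))"

lemma modelA_Suc': "modelA s ku m d1 d2 g q kw n u0 v0 w0 h (Suc t) = stepf (h t) (modelA s ku m d1 d2 g q kw n u0 v0 w0 h t)"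
  by (cases "modelA s ku m d1 d2 g q kw n u0 v0 w0 h t") (simp add: stepf_def)

fun run :: "(nat \<Rightarrow> real) \<Rightarrow> nat \<Rightarrow> nat \<Rightarrow> real \<times> real \<times> real \<Rightarrow> real \<times> real \<times> real" where
  "run h 0 t x = x"
| "run h (Suc k) t x = run h k (Suc t) (stepf (h t) x)"

lemma modelA_run: "modelA s ku m d1 d2 g q kw n u0 v0 w0 h (t + k) = run h k t (modelA s ku m d1 d2 g q kw n u0 v0 w0 h t)"
proof (induction k arbitrary: t)
  case 0 then show ?case by simp
next
  case (Suc k)
  have "modelA s ku m d1 d2 g q kw n u0 v0 w0 h (t + Suc k) = modelA s ku m d1 d2 g q kw n u0 v0 w0 h (Suc t + k)" by simp
  also have "\<dots> = run h k (Suc t) (modelA s ku m d1 d2 g q kw n u0 v0 w0 h (Suc t))" by (rule Suc.IH)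
  finally show ?case by (simp add: modelA_Suc' del: modelA.simps)
qed

lemma run_cong: "(\<And>i. t \<le> i \<Longrightarrow> i < t + k \<Longrightarrow> h i = h' i) \<Longrightarrow> run h k t x = run h' k t x"
proof (induction k arbitrary: t x)
  case 0 then show ?case by simp
next
  case (Suc k)
  have "h t = h' t" using Suc.prems by simp
  moreover have "run h k (Suc t) y = run h' k (Suc t) y" for y using Suc.prems by (intro Suc.IH) auto
  ultimately show ?case by simp
qed

lemma modelA_cong: "(\<And>i. i < t \<Longrightarrow> h i = h' i) \<Longrightarrow> modelA s ku m d1 d2 g q kw n u0 v0 w0 h t = modelA s ku m d1 d2 g q kw n u0 v0 w0 h' t"
  by (induction t) (simp_all add: modelA_Suc')

definition gd :: "real \<Rightarrow> real \<Rightarrow> real \<Rightarrow> real \<Rightarrow> real" where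
  "gd r k a x = r / k * (1 - x / k) - r / k * (x / k - a)"

lemma growth_deriv: "((growth r k a) has_derivative (\<lambda>d. gd r k a x * d)) (at x)"
proof -
  have "(growth r k a has_real_derivative gd r k a x) (at x)"
    unfolding growth_def[abs_def] gd_def divide_inverse
    by (auto intro!: derivative_eq_intros simp: algebra_simps)
  then show ?thesis by (simp add: has_field_derivative_def)
qed

lemma fst_d: "((\<lambda>x::real\<times>real\<times>real. fst x) has_derivative fst) (at x)"
  by (rule has_derivative_fst[OF has_derivative_ident])
lemma snd_d: "((\<lambda>x::real\<times>real\<times>real. snd x) has_derivative snd) (at x)"
  by (rule has_derivative_snd[OF has_derivative_ident])
lemma fsnd_d: "((\<lambda>x::real\<times>real\<times>real. fst (snd x)) has_derivative (\<lambda>d. fst (snd d))) (at x)"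
  by (rule has_derivative_fst[OF snd_d])
lemma ssnd_d: "((\<lambda>x::real\<times>real\<times>real. snd (snd x)) has_derivative (\<lambda>d. snd (snd d))) (at x)"
  by (rule has_derivative_snd[OF snd_d])

lemma gu_d: "((\<lambda>x::real\<times>real\<times>real. growth r k a (fst x)) has_derivative (\<lambda>d. gd r k a (fst x) * fst d)) (at x)"
  using has_derivative_compose[OF fst_d growth_deriv] .
lemma gw_d: "((\<lambda>x::real\<times>real\<times>real. growth r k a (snd (snd x))) has_derivative (\<lambda>d. gd r k a (snd (snd x)) * snd (snd d))) (at x)"
  using has_derivative_compose[OF ssnd_d growth_deriv] .

lemma stepf_deriv_x: "(stepf c has_derivative (\<lambda>d.
   ((growth s ku m (fst x) + fst x * gd s ku m (fst x)) * (1 - d1 * fst (snd x)) * fst d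
     - fst x * growth s ku m (fst x) * d1 * fst (snd d)
     + c * (growth q kw n (snd (snd x)) + snd (snd x) * gd q kw n (snd (snd x))) * snd (snd d),
    (growth s ku m (fst x) + fst x * gd s ku m (fst x)) * d2 * fst (snd x) * (1 - g) * fst d
     + (1 + fst x * growth s ku m (fst x) * d2) * (1 - g) * fst (snd d),
    (1 - c) * (growth q kw n (snd (snd x)) + snd (snd x) * gd q kw n (snd (snd x))) * snd (snd d)))) (at x)"
  unfolding stepf_def
  apply (rule has_derivative_eq_rhs)
   apply (rule has_derivative_Pair has_derivative_add has_derivative_diff has_derivative_mult
       has_derivative_const fst_d fsnd_d ssnd_d gu_d gw_d)+
  apply (simp add: fun_eq_iff prod_eq_iff algebra_simps)
  done

lemma stepf_deriv_c: "((\<lambda>c. stepf c x) has_derivative (\<lambda>e.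
   (e * snd (snd x) * growth q kw n (snd (snd x)), 0, - e * snd (snd x) * growth q kw n (snd (snd x))))) (at c)"
  unfolding stepf_def
  apply (rule has_derivative_eq_rhs)
   apply (rule has_derivative_Pair has_derivative_add has_derivative_diff has_derivative_mult
       has_derivative_const has_derivative_ident)+
  apply (simp add: fun_eq_iff prod_eq_iff algebra_simps)
  done

definition backstep :: "real \<Rightarrow> real \<times> real \<times> real \<Rightarrow> real \<times> real \<times> real \<Rightarrow> real \<times> real \<times> real" where
  "backstep c x L = (
     ((1 - d1 * fst (snd x)) * fst L + d2 * fst (snd x) * (1 - g) * fst (snd L)) * growth s ku m (fst x)
     + (fst x * (1 - d1 * fst (snd x)) * fst L + fst x * d2 * fst (snd x) * (1 - g) * fst (snd L)) * gd s ku m (fst x),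
     - fst L * fst x * growth s ku m (fst x) * d1 + fst (snd L) * (1 + fst x * growth s ku m (fst x) * d2) * (1 - g),
     (c * fst L + (1 - c) * snd (snd L)) * growth q kw n (snd (snd x))
     + snd (snd x) * (c * fst L + (1 - c) * snd (snd L)) * gd q kw n (snd (snd x)))"

fun adj :: "(nat \<Rightarrow> real) \<Rightarrow> nat \<Rightarrow> real \<Rightarrow> nat \<Rightarrow> real \<times> real \<times> real" where
  "adj h T N 0 = (1, 0, N)"
| "adj h T N (Suc k) = backstep (h (T - Suc k)) (modelA s ku m d1 d2 g q kw n u0 v0 w0 h (T - Suc k)) (adj h T N k)"

lemma main_deriv:
  "t + k = T \<Longrightarrow> ((\<lambda>x. fst (run hs k t x) + N * snd (snd (run hs k t x))) has_derivative
     (\<lambda>d. fst (adj hs T N k) * fst d + fst (snd (adj hs T N k)) * fst (snd d)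
          + snd (snd (adj hs T N k)) * snd (snd d))) (at (modelA s ku m d1 d2 g q kw n u0 v0 w0 hs t))"
proof (induction k arbitrary: t)
  case 0
  show ?case
    apply simp
    apply (rule has_derivative_eq_rhs)
     apply (rule has_derivative_add has_derivative_mult has_derivative_const fst_d ssnd_d)+
    apply (simp add: fun_eq_iff)
    done
next
  case (Suc k)
  have e: "T - Suc k = t" using Suc.prems by simp
  have IH: "((\<lambda>x. fst (run hs k (Suc t) x) + N * snd (snd (run hs k (Suc t) x))) has_derivative
     (\<lambda>d. fst (adj hs T N k) * fst d + fst (snd (adj hs T N k)) * fst (snd d)
          + snd (snd (adj hs T N k)) * snd (snd d))) (at (stepf (hs t) (modelA s ku m d1 d2 g q kw n u0 v0 w0 hs t)))"
    using Suc.IH[of "Suc t"] Suc.prems by (simp add: modelA_Suc' del: modelA.simps)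
  show ?case
    apply (simp del: modelA.simps add: e)
    apply (rule has_derivative_eq_rhs)
     apply (rule has_derivative_compose[OF stepf_deriv_x IH])
    apply (simp add: fun_eq_iff backstep_def algebra_simps)
    done
qed

lemma adj_rec: "t < T \<Longrightarrow> adj hs T N (T - t) = backstep (hs t) (modelA s ku m d1 d2 g q kw n u0 v0 w0 hs t) (adj hs T N (T - Suc t))"
proof -
  assume "t < T"
  then have e: "T - t = Suc (T - Suc t)" "T - Suc (T - Suc t) = t" by auto
  show ?thesis by (subst e(1), simp only: adj.simps e(2))
qed

lemma control_cond:
  assumes M1: "M1 > 0" and A: "A > 0" and hin: "hs \<in> controlset T A"
    and opt: "\<forall>h \<in> controlset T A.
               objJ s ku m d1 d2 g q kw n u0 v0 w0 T N M1 M2 h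
                 \<le> objJ s ku m d1 d2 g q kw n u0 v0 w0 T N M1 M2 hs"
    and tT: "t < T"
  shows "hs t = min A (max 0 (((fst (adj hs T N (T - Suc t)) - snd (snd (adj hs T N (T - Suc t))))
            * growth q kw n (snd (snd (modelA s ku m d1 d2 g q kw n u0 v0 w0 hs t)))
            * snd (snd (modelA s ku m d1 d2 g q kw n u0 v0 w0 hs t)) - M2) / (2 * M1)))"
proof -
  define k where "k = T - Suc t"
  define p where "p = modelA s ku m d1 d2 g q kw n u0 v0 w0 hs t"
  define L where "L = adj hs T N k"
  define w where "w = snd (snd p)"
  define R where "R = (\<Sum>i\<in>{..<T} - {t}. M1 * (hs i)^2 + M2 * hs i)"
  define \<phi> where "\<phi> c = objJ s ku m d1 d2 g q kw n u0 v0 w0 T N M1 M2 (hs(t := c))" for c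
  define Dv where "Dv = (fst L - snd (snd L)) * growth q kw n w * w - 2 * M1 * hs t - M2"
  have Tk: "T = Suc t + k" using tT by (simp add: k_def)
  have phi_eq: "\<phi> c = fst (run hs k (Suc t) (stepf c p)) + N * snd (snd (run hs k (Suc t) (stepf c p)))
       - (M1 * c^2 + M2 * c) - R" for c
  proof -
    have "modelA s ku m d1 d2 g q kw n u0 v0 w0 (hs(t := c)) T
        = run (hs(t := c)) k (Suc t) (modelA s ku m d1 d2 g q kw n u0 v0 w0 (hs(t := c)) (Suc t))"
      unfolding Tk by (rule modelA_run)
    also have "\<dots> = run hs k (Suc t) (modelA s ku m d1 d2 g q kw n u0 v0 w0 (hs(t := c)) (Suc t))"
      by (rule run_cong) auto
    also have "modelA s ku m d1 d2 g q kw n u0 v0 w0 (hs(t := c)) (Suc t) = stepf c (modelA s ku m d1 d2 g q kw n u0 v0 w0 (hs(t := c)) t)"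
      by (simp add: modelA_Suc' del: modelA.simps)
    also have "modelA s ku m d1 d2 g q kw n u0 v0 w0 (hs(t := c)) t = p"
      unfolding p_def by (rule modelA_cong) auto
    finally have 1: "modelA s ku m d1 d2 g q kw n u0 v0 w0 (hs(t := c)) T = run hs k (Suc t) (stepf c p)" .
    have 2: "(\<Sum>i<T. M1 * ((hs(t := c)) i)^2 + M2 * (hs(t := c)) i) = (M1 * c^2 + M2 * c) + R"
    proof -
      have "(\<Sum>i<T. M1 * ((hs(t := c)) i)^2 + M2 * (hs(t := c)) i)
          = (M1 * c^2 + M2 * c) + (\<Sum>i\<in>{..<T} - {t}. M1 * ((hs(t := c)) i)^2 + M2 * (hs(t := c)) i)"
        using tT by (subst sum.remove[of _ t]) auto
      also have "(\<Sum>i\<in>{..<T} - {t}. M1 * ((hs(t := c)) i)^2 + M2 * (hs(t := c)) i) = R"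
        unfolding R_def by (rule sum.cong) auto
      finally show ?thesis .
    qed
    show ?thesis unfolding \<phi>_def objJ_def stU_def stW_def 1 2 by simp
  qed
  have hsA: "0 \<le> hs t" "hs t \<le> A" using hin tT by (auto simp: controlset_def)
  have st: "modelA s ku m d1 d2 g q kw n u0 v0 w0 hs (t + Suc 0 + 0) = stepf (hs t) p"
    by (simp add: modelA_Suc' p_def del: modelA.simps)
  have MD: "((\<lambda>x. fst (run hs k (Suc t) x) + N * snd (snd (run hs k (Suc t) x))) has_derivative
     (\<lambda>d. fst L * fst d + fst (snd L) * fst (snd d) + snd (snd L) * snd (snd d))) (at (stepf (hs t) p))"
    using main_deriv[of "Suc t" k T hs N] Tk unfolding L_def by (simp add: modelA_Suc' p_def del: modelA.simps)
  have "\<phi> = (\<lambda>c. fst (run hs k (Suc t) (stepf c p)) + N * snd (snd (run hs k (Suc t) (stepf c p)))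
       - (M1 * c^2 + M2 * c) - R)" using phi_eq by auto
  moreover have "((\<lambda>c. fst (run hs k (Suc t) (stepf c p)) + N * snd (snd (run hs k (Suc t) (stepf c p)))
       - (M1 * c^2 + M2 * c) - R) has_derivative (\<lambda>e. Dv * e)) (at (hs t))"
    apply (rule has_derivative_eq_rhs)
     apply (rule has_derivative_diff has_derivative_compose[OF stepf_deriv_c MD]
         has_derivative_add has_derivative_mult has_derivative_power has_derivative_const
         has_derivative_ident)+
    apply (simp add: fun_eq_iff Dv_def w_def algebra_simps)
    done
  ultimately have D: "(\<phi> has_real_derivative Dv) (at (hs t))"
    by (simp add: has_field_derivative_def)
  have hs_upd: "hs(t := hs t) = hs" by simp
  have le: "\<phi> c \<le> \<phi> (hs t)" if "0 \<le> c" "c \<le> A" for c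
  proof -
    have "hs(t := c) \<in> controlset T A" using hin that by (auto simp: controlset_def)
    then show ?thesis using opt unfolding \<phi>_def hs_upd by blast
  qed
  have c1: "Dv \<le> 0" if "hs t < A"
  proof (rule ccontr)
    assume "\<not> Dv \<le> 0"
    then obtain d where d: "d > 0" "\<forall>h>0. h < d \<longrightarrow> \<phi> (hs t) < \<phi> (hs t + h)"
      using DERIV_pos_inc_right[OF D] by auto
    define e where "e = min (d/2) ((A - hs t)/2)"
    have "e \<le> (A - hs t)/2" "e \<le> d/2" unfolding e_def by (rule min.cobounded2, rule min.cobounded1)
    moreover have "e > 0" using d that by (simp add: e_def)
    ultimately have "e > 0 \<and> e < d \<and> hs t + e \<le> A" using d that by (auto simp: field_simps)
    then show False using d le[of "hs t + e"] hsA by auto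
  qed
  have c2: "Dv \<ge> 0" if "hs t > 0"
  proof (rule ccontr)
    assume "\<not> Dv \<ge> 0"
    then obtain d where d: "d > 0" "\<forall>h>0. h < d \<longrightarrow> \<phi> (hs t) < \<phi> (hs t - h)"
      using DERIV_neg_dec_left[OF D] by auto
    define e where "e = min (d/2) (hs t/2)"
    have "e \<le> hs t/2" "e \<le> d/2" unfolding e_def by (rule min.cobounded2, rule min.cobounded1)
    moreover have "e > 0" using d that by (simp add: e_def)
    ultimately have "e > 0 \<and> e < d \<and> hs t - e \<ge> 0" using d that by (auto simp: field_simps)
    then show False using d le[of "hs t - e"] hsA by auto
  qed
  define X where "X = ((fst L - snd (snd L)) * growth q kw n w * w - M2) / (2 * M1)"
  have DX: "Dv = 2 * M1 * (X - hs t)" unfolding X_def Dv_def using M1 by (simp add: field_simps)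
  have "hs t = min A (max 0 X)"
  proof (cases "hs t = 0")
    case True
    then have "X \<le> 0" using c1 A DX M1 by (auto simp: mult_le_0_iff)
    then show ?thesis using True A by simp
  next
    case False
    then have pos: "hs t > 0" using hsA by simp
    then have "X \<ge> hs t" using c2 DX M1 by (auto simp: zero_le_mult_iff)
    show ?thesis
    proof (cases "hs t = A")
      case True then show ?thesis using \<open>X \<ge> hs t\<close> A by simp
    next
      case False
      then have "X \<le> hs t" using c1 hsA DX M1 by (auto simp: mult_le_0_iff)
      then show ?thesis using \<open>X \<ge> hs t\<close> pos hsA by simp
    qed
  qed
  then show ?thesis unfolding X_def L_def k_def w_def p_def .
qed

end
theorem theorem1:
  fixes T :: nat and s ku m d1 d2 g q kw n A M1 M2 N u0 v0 w0 :: real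
    and hs us vs ws :: "nat \<Rightarrow> real"
  assumes "T \<ge> 1"
    and "s > 0" "ku > 0" "m > 0" "m < 1" "d1 > 0" "d2 > 0" "g > 0"
    and "q > 0" "kw > 0" "n > 0" "n < 1" "A > 0" "M1 > 0" "M2 \<ge> 0" "N > 0" "N < 1"
    and opt_in: "hs \<in> controlset T A"
    and opt: "\<forall>h \<in> controlset T A.
               objJ s ku m d1 d2 g q kw n u0 v0 w0 T N M1 M2 h
                 \<le> objJ s ku m d1 d2 g q kw n u0 v0 w0 T N M1 M2 hs"
    and us_def: "us = stU s ku m d1 d2 g q kw n u0 v0 w0 hs"
    and vs_def: "vs = stV s ku m d1 d2 g q kw n u0 v0 w0 hs"
    and ws_def: "ws = stW s ku m d1 d2 g q kw n u0 v0 w0 hs"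
  shows "\<exists>lu lv lw :: nat \<Rightarrow> real.
     lu T = 1 \<and> lv T = 0 \<and> lw T = N \<and>
     (\<forall>t<T.
        lu t = ((1 - d1 * vs t) * lu (t+1) + d2 * vs t * (1 - g) * lv (t+1)) * growth s ku m (us t)
               + (us t * (1 - d1 * vs t) * lu (t+1) + us t * d2 * vs t * (1 - g) * lv (t+1))
                 * (s / ku * (1 - us t / ku) - s / ku * (us t / ku - m)) \<and>
        lv t = - lu (t+1) * us t * growth s ku m (us t) * d1
               + lv (t+1) * (1 + us t * growth s ku m (us t) * d2) * (1 - g) \<and>
        lw t = (hs t * lu (t+1) + (1 - hs t) * lw (t+1)) * growth q kw n (ws t)
               + ws t * (hs t * lu (t+1) + (1 - hs t) * lw (t+1))
                 * (q / kw * (1 - ws t / kw) - q / kw * (ws t / kw - n))) \<and>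
     (\<forall>t<T. hs t = min A (max 0
        (((lu (t+1) - lw (t+1)) * growth q kw n (ws t) * ws t - M2) / (2 * M1))))"
proof -
  define L where "L t = adj s ku m d1 d2 g q kw n u0 v0 w0 hs T N (T - t)" for t
  have LT: "L T = (1, 0, N)" by (simp add: L_def)
  have Lrec: "L t = backstep s ku m d1 d2 g q kw n (hs t) (modelA s ku m d1 d2 g q kw n u0 v0 w0 hs t) (L (t+1))"
    if "t < T" for t
    using adj_rec[OF that] by (simp add: L_def)
  have uvw: "us t = fst (modelA s ku m d1 d2 g q kw n u0 v0 w0 hs t)"
     "vs t = fst (snd (modelA s ku m d1 d2 g q kw n u0 v0 w0 hs t))"
     "ws t = snd (snd (modelA s ku m d1 d2 g q kw n u0 v0 w0 hs t))" for t
    by (simp_all add: us_def vs_def ws_def stU_def stV_def stW_def)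
  have ctl: "hs t = min A (max 0 (((fst (L (t+1)) - snd (snd (L (t+1)))) * growth q kw n (ws t) * ws t - M2) / (2 * M1)))"
    if "t < T" for t
    using control_cond[OF \<open>M1 > 0\<close> \<open>A > 0\<close> opt_in opt that] by (simp add: L_def uvw)
  show ?thesis
    apply (rule exI[of _ "\<lambda>t. fst (L t)"], rule exI[of _ "\<lambda>t. fst (snd (L t))"], rule exI[of _ "\<lambda>t. snd (snd (L t))"])
    apply (intro conjI allI impI)
    using LT apply simp
    using LT apply simp
    using LT apply simp
    subgoal for t using Lrec[of t] by (simp add: backstep_def gd_def uvw)
    subgoal for t using Lrec[of t] by (simp add: backstep_def gd_def uvw)
    subgoal for t using Lrec[of t] by (simp add: backstep_def gd_def uvw)
    subgoal for t using ctl[of t] by simp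
    done
qed

end
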